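(* Let $R=(c_1,\dots,c_k)+B^\oplus$ be an atomic resimple expression. For each $j\in\{1,\dots,k\}$ let $p_j=n$ if $n\mathbf{e}_j\in B$, and $p_j=2$ if $B$ contains no element of the form $n\mathbf{e}_j$. Then the complete deterministic automaton $\mathcal{A}=\mathcal{A}_1\between\cdots\between\mathcal{A}_k$ described below accepts $\varphi^{-1}(R)$ and has exactly $\prod_{j=1}^k (c_j+p_j)$ states.
   Context: $\mathbb{N}$ includes $0$; $\mathbf{e}_j$ is the $j$-th unit vector of $\mathbb{N}^k$. For finite $B\subseteq\mathbb{N}^k$, $B^\oplus$ is the set of $\mathbb{N}$-linear combinations of elements of $B$. $B$ is free if every element of $B^\oplus$ has a unique such representation; an element is primary if it is $n\mathbf{e}_j$ with $n>0$; an atomic resimple expression is $\gamma+B^\oplus$ with $\gamma=(c_1,\dots,c_k)\in\mathbb{N}^k$ and $B$ a free basis all of whose elements are primary (so $B$ contains at most one element of the form $n\mathbf{e}_j$ for each $j$). Let $A=\{a_1,\dots,a_k\}$ and $\varphi(w)=(|w|_{a_1},\dots,|w|_{a_k})$ for $w\in A^*$. For each $j$, $\mathcal{A}_j$ is the complete deterministic automaton over the one-letter alphabet $\{a_j\}$ accepting $\{a_j^{m}: m\in S_j\}$, where $S_j=c_j+p_j\mathbb{N}$ if $p_j\mathbf{e}_j\in B$ and $S_j=\{c_j\}$ otherwise: in the first case it has states $0,1,\dots,c_j+p_j-1$, initial state $0$, transitions $i\xrightarrow{a_j}i+1$ for $i<c_j+p_j-1$ and $c_j+p_j-1\xrightarrow{a_j}c_j$,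 final state $c_j$; in the second case it has states $0,\dots,c_j$ plus a sink state, transitions $i\xrightarrow{a_j}i+1$ for $i<c_j$, $c_j\xrightarrow{a_j}$ sink, sink $\xrightarrow{a_j}$ sink, final state $c_j$. Each $\mathcal{A}_j$ is regarded as an automaton over $A$. The shuffle product of $\langle Q',A,E',I',T'\rangle$ and $\langle Q'',A,E'',I'',T''\rangle$ is $\langle Q'\times Q'',A,E,I'\times I'',T'\times T''\rangle$ with $E=\{((p',p''),a,(q',p'')):p''\in Q'',(p',a,q')\in E'\}\cup\{((p',p''),a,(p',q'')):p'\in Q',(p'',a,q'')\in E''\}$, iterated for more factors. *)

theory Defs
  imports Main
begin

(* Alphabet A = {a_1,...,a_k} is represented by the letters 0..<k (letter j-1 stands for a_j).
   Vectors of N^k are functions nat => nat that vanish outside {..<k}. *)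

definition unitv :: "nat \<Rightarrow> (nat \<Rightarrow> nat)" where
  "unitv j = (\<lambda>i. if i = j then 1 else 0)"

definition smul :: "nat \<Rightarrow> (nat \<Rightarrow> nat) \<Rightarrow> (nat \<Rightarrow> nat)" where
  "smul n v = (\<lambda>i. n * v i)"

definition lin_comb :: "(nat \<Rightarrow> nat) set \<Rightarrow> ((nat \<Rightarrow> nat) \<Rightarrow> nat) \<Rightarrow> (nat \<Rightarrow> nat)" where
  "lin_comb B l = (\<lambda>i. \<Sum>b\<in>B. l b * b i)"

definition oplus_set :: "(nat \<Rightarrow> nat) set \<Rightarrow> (nat \<Rightarrow> nat) set" where
  "oplus_set B = {lin_comb B l | l. True}"

definition free_basis :: "(nat \<Rightarrow> nat) set \<Rightarrow> bool" where
  "free_basis B \<longleftrightarrow> (\<forall>l m. lin_comb B l = lin_comb B m \<longrightarrow> (\<forall>b\<in>B. l b = m b))"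

definition primary :: "nat \<Rightarrow> (nat \<Rightarrow> nat) \<Rightarrow> bool" where
  "primary k b \<longleftrightarrow> (\<exists>n j. n > 0 \<and> j < k \<and> b = smul n (unitv j))"

definition atomic_resimple :: "nat \<Rightarrow> (nat \<Rightarrow> nat) \<Rightarrow> (nat \<Rightarrow> nat) set \<Rightarrow> bool" where
  "atomic_resimple k c B \<longleftrightarrow> finite B \<and> (\<forall>i\<ge>k. c i = 0) \<and> free_basis B \<and> (\<forall>b\<in>B. primary k b)"

definition resimple_set :: "(nat \<Rightarrow> nat) \<Rightarrow> (nat \<Rightarrow> nat) set \<Rightarrow> (nat \<Rightarrow> nat) set" where
  "resimple_set c B = {(\<lambda>i. c i + x i) | x. x \<in> oplus_set B}"

definition parikh :: "nat list \<Rightarrow> (nat \<Rightarrow> nat)" where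
  "parikh w = (\<lambda>i. count_list w i)"

definition has_period :: "(nat \<Rightarrow> nat) set \<Rightarrow> nat \<Rightarrow> bool" where
  "has_period B j \<longleftrightarrow> (\<exists>n>0. smul n (unitv j) \<in> B)"

definition pj :: "(nat \<Rightarrow> nat) set \<Rightarrow> nat \<Rightarrow> nat" where
  "pj B j = (if has_period B j then (THE n. n > 0 \<and> smul n (unitv j) \<in> B) else 2)"

record 's aut =
  astates :: "'s set"
  atrans :: "('s \<times> nat \<times> 's) set"
  ainit :: "'s set"
  afinal :: "'s set"

inductive path :: "'s aut \<Rightarrow> 's \<Rightarrow> nat list \<Rightarrow> 's \<Rightarrow> bool" for M where
  path_nil: "path M q [] q"
| path_cons: "(q, a, q') \<in> atrans M \<Longrightarrow> path M q' w r \<Longrightarrow> path M q (a # w) r"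

definition lang :: "'s aut \<Rightarrow> nat set \<Rightarrow> nat list set" where
  "lang M Sig = {w \<in> lists Sig. \<exists>q0\<in>ainit M. \<exists>qf\<in>afinal M. path M q0 w qf}"

definition complete_det :: "'s aut \<Rightarrow> nat set \<Rightarrow> bool" where
  "complete_det M Sig \<longleftrightarrow>
     ainit M \<subseteq> astates M \<and> afinal M \<subseteq> astates M \<and> card (ainit M) = 1 \<and>
     atrans M \<subseteq> astates M \<times> Sig \<times> astates M \<and>
     (\<forall>q\<in>astates M. \<forall>a\<in>Sig. \<exists>!q'. (q, a, q') \<in> atrans M)"

(* The automaton A_j (letter j), states Some i, sink = None *)
definition autj :: "(nat \<Rightarrow> nat) \<Rightarrow> (nat \<Rightarrow> nat) set \<Rightarrow> nat \<Rightarrow> nat option aut" where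
  "autj c B j = (if has_period B j then
      \<lparr> astates = Some ` {0..<c j + pj B j},
        atrans = {(Some i, j, Some (i+1)) | i. i < c j + pj B j - 1}
                 \<union> {(Some (c j + pj B j - 1), j, Some (c j))},
        ainit = {Some 0}, afinal = {Some (c j)} \<rparr>
    else
      \<lparr> astates = Some ` {0..c j} \<union> {None},
        atrans = {(Some i, j, Some (i+1)) | i. i < c j}
                 \<union> {(Some (c j), j, None), (None, j, None)},
        ainit = {Some 0}, afinal = {Some (c j)} \<rparr>)"

(* Iterated shuffle product of a list of automata; states are tuples represented as lists *)
definition shuffle :: "'s aut list \<Rightarrow> 's list aut" where
  "shuffle As = (let k = length As in
     \<lparr> astates = {q. length q = k \<and> (\<forall>j<k. q ! j \<in> astates (As ! j))},
       atrans = {(q, a, q[j := q']) | q a j q'. length q = k \<and> j < k \<and>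
                   (\<forall>i<k. i \<noteq> j \<longrightarrow> q ! i \<in> astates (As ! i)) \<and>
                   (q ! j, a, q') \<in> atrans (As ! j)},
       ainit = {q. length q = k \<and> (\<forall>j<k. q ! j \<in> ainit (As ! j))},
       afinal = {q. length q = k \<and> (\<forall>j<k. q ! j \<in> afinal (As ! j))} \<rparr>)"

end

theory Submission imports Defs begin

lemma lin_comb_single:
  assumes "finite B" "b1 \<in> B"
  shows "lin_comb B (\<lambda>b. if b = b1 then m else 0) = smul m b1"
proof -
  have "\<And>i. (\<Sum>b\<in>B. (if b = b1 then m else 0) * b i) = m * b1 i"
  proof -
    fix i
    have "(\<Sum>b\<in>B. (if b = b1 then m else 0) * b i) = (\<Sum>b\<in>B. if b = b1 then m * b i else 0)"
      by (rule sum.cong) auto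
    also have "\<dots> = m * b1 i" using assms by (simp add: sum.delta')
    finally show "(\<Sum>b\<in>B. (if b = b1 then m else 0) * b i) = m * b1 i" .
  qed
  thus ?thesis unfolding lin_comb_def smul_def by auto
qed

lemma period_unique:
  assumes "finite B" "free_basis B" "smul n (unitv j) \<in> B" "smul m (unitv j) \<in> B" "n > 0" "m > 0"
  shows "n = m"
proof (rule ccontr)
  assume ne: "n \<noteq> m"
  let ?b1 = "smul n (unitv j)" and ?b2 = "smul m (unitv j)"
  have bne: "?b1 \<noteq> ?b2"
  proof
    assume "?b1 = ?b2"
    hence "?b1 j = ?b2 j" by simp
    thus False using ne by (simp add: smul_def unitv_def)
  qed
  have "lin_comb B (\<lambda>b. if b = ?b1 then m else 0) = lin_comb B (\<lambda>b. if b = ?b2 then n else 0)"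
    using assms by (simp only: lin_comb_single) (simp add: smul_def unitv_def fun_eq_iff)
  with assms(2) have "(\<lambda>b. if b = ?b1 then m else 0) ?b1 = (\<lambda>b. if b = ?b2 then n else 0) ?b1"
    unfolding free_basis_def using assms(3) by blast
  with bne assms(6) show False by simp
qed

lemma pj_props:
  assumes "finite B" "free_basis B" "has_period B j"
  shows "pj B j > 0" "smul (pj B j) (unitv j) \<in> B"
proof -
  obtain n where n: "n > 0" "smul n (unitv j) \<in> B" using assms(3) has_period_def by blast
  have "(THE n. n > 0 \<and> smul n (unitv j) \<in> B) = n"
    by (rule the_equality) (use n period_unique[OF assms(1,2)] in blast)+
  thus "pj B j > 0" "smul (pj B j) (unitv j) \<in> B" using n assms(3) by (simp_all add: pj_def)
qed

lemma lin_comb_comp: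
  assumes "atomic_resimple k c B"
  shows "lin_comb B l i = (if has_period B i then l (smul (pj B i) (unitv i)) * pj B i else 0)"
proof -
  have fin: "finite B" and fr: "free_basis B" and pr: "\<forall>b\<in>B. primary k b"
    using assms atomic_resimple_def by auto
  have "lin_comb B l i = (\<Sum>b\<in>B. l b * b i)" by (simp add: lin_comb_def)
  also have "\<dots> = (\<Sum>b\<in>{b\<in>B. b i \<noteq> 0}. l b * b i)"
    using fin by (simp add: sum.inter_filter) (rule sum.cong, auto)
  also have "\<dots> = (if has_period B i then l (smul (pj B i) (unitv i)) * pj B i else 0)"
  proof (cases "has_period B i")
    case True
    note P = pj_props[OF fin fr True]
    have "{b\<in>B. b i \<noteq> 0} = {smul (pj B i) (unitv i)}"
    proof -
      have "b = smul (pj B i) (unitv i)" if b: "b \<in> B" "b i \<noteq> 0" for b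
      proof -
        obtain n j where nj: "n > 0" "b = smul n (unitv j)" using b pr primary_def by blast
        with b have "j = i" by (auto simp: smul_def unitv_def split: if_splits)
        with nj b P period_unique[OF fin fr] show "b = smul (pj B i) (unitv i)" by metis
      qed
      moreover have "smul (pj B i) (unitv i) i \<noteq> 0" using P(1) by (simp add: smul_def unitv_def)
      ultimately show ?thesis using P(2) by blast
    qed
    thus ?thesis using True by (simp add: smul_def unitv_def)
  next
    case False
    have "{b\<in>B. b i \<noteq> 0} = {}"
    proof -
      have False if b: "b \<in> B" "b i \<noteq> 0" for b
      proof -
        obtain n j where nj: "n > 0" "b = smul n (unitv j)" using b pr primary_def by blast
        with b have "j = i" by (auto simp: smul_def unitv_def split: if_splits)
        with nj b False show False unfolding has_period_def by blast
      qed
      thus ?thesis by blast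
    qed
    thus ?thesis using False by (simp only:) simp
  qed
  finally show ?thesis .
qed

lemma has_period_lt:
  assumes "atomic_resimple k c B" "has_period B i" shows "i < k"
proof -
  obtain n where n: "n > 0" "smul n (unitv i) \<in> B" using assms(2) has_period_def by blast
  then obtain m j where "m > 0" "j < k" "smul n (unitv i) = smul m (unitv j)"
    using assms(1) unfolding atomic_resimple_def primary_def by blast
  hence "smul n (unitv i) i = smul m (unitv j) i" by simp
  with n \<open>m>0\<close> have "i = j" by (auto simp: smul_def unitv_def split: if_splits)
  with \<open>j<k\<close> show ?thesis by simp
qed

lemma resimple_iff:
  assumes ar: "atomic_resimple k c B" and w: "w \<in> lists {..<k}"
  shows "parikh w \<in> resimple_set c B \<longleftrightarrow>
    (\<forall>j<k. if has_period B j then c j \<le> count_list w j \<and> pj B j dvd (count_list w j - c j)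
           else count_list w j = c j)"
proof -
  have fin: "finite B" and fr: "free_basis B" and c0: "\<forall>i\<ge>k. c i = 0"
    using ar atomic_resimple_def by auto
  have cnt0: "count_list w i = 0" if "i \<ge> k" for i
    using w that by (simp add: count_list_0_iff) (use in_listsD in fastforce)
  show ?thesis
  proof
    assume "parikh w \<in> resimple_set c B"
    then obtain l where l: "parikh w = (\<lambda>i. c i + lin_comb B l i)"
      unfolding resimple_set_def oplus_set_def by auto
    show "\<forall>j<k. if has_period B j then c j \<le> count_list w j \<and> pj B j dvd (count_list w j - c j)
           else count_list w j = c j"
    proof (intro allI impI)
      fix j assume "j < k"
      have "count_list w j = c j + lin_comb B l j" using l by (metis parikh_def)
      thus "if has_period B j then c j \<le> count_list w j \<and> pj B j dvd (count_list w j - c j)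
           else count_list w j = c j"
        using lin_comb_comp[OF ar, of l j] by auto
    qed
  next
    assume H: "\<forall>j<k. if has_period B j then c j \<le> count_list w j \<and> pj B j dvd (count_list w j - c j)
           else count_list w j = c j"
    define jb where "jb b = (SOME j. b j \<noteq> 0)" for b :: "nat \<Rightarrow> nat"
    define l where "l b = (count_list w (jb b) - c (jb b)) div pj B (jb b)" for b
    have "parikh w = (\<lambda>i. c i + lin_comb B l i)"
    proof
      fix i
      show "parikh w i = c i + lin_comb B l i"
      proof (cases "has_period B i")
        case True
        note P = pj_props[OF fin fr True]
        have ik: "i < k" using has_period_lt[OF ar True] .
        have "jb (smul (pj B i) (unitv i)) = i"
          unfolding jb_def
          by (rule some_equality) (use P(1) in \<open>auto simp: smul_def unitv_def split: if_splits\<close>)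
        hence "l (smul (pj B i) (unitv i)) * pj B i = count_list w i - c i"
          using H ik True by (simp add: l_def)
        thus ?thesis using lin_comb_comp[OF ar, of l i] True H ik by (simp add: parikh_def)
      next
        case False
        thus ?thesis using lin_comb_comp[OF ar, of l i] H c0 cnt0
          by (cases "i < k") (auto simp: parikh_def)
      qed
    qed
    thus "parikh w \<in> resimple_set c B"
      unfolding resimple_set_def oplus_set_def by blast
  qed
qed


definition dl :: "(nat\<Rightarrow>nat) \<Rightarrow> (nat\<Rightarrow>nat) set \<Rightarrow> nat \<Rightarrow> nat option \<Rightarrow> nat option" where
 "dl c B j s = (if has_period B j then (case s of Some i \<Rightarrow> if i < c j + pj B j - 1 then Some (i+1) else Some (c j) | None \<Rightarrow> None)
    else (case s of Some i \<Rightarrow> if i < c j then Some (i+1) else None | None \<Rightarrow> None))"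

lemma autj_trans:
  assumes "has_period B j \<Longrightarrow> pj B j > 0"
  shows "(s, a, s') \<in> atrans (autj c B j) \<longleftrightarrow> s \<in> astates (autj c B j) \<and> a = j \<and> s' = dl c B j s"
proof (cases "has_period B j")
  case True
  with assms have p: "pj B j > 0" by simp
  show ?thesis using True p
    by (cases s) (auto simp: autj_def dl_def)
next
  case False
  show ?thesis using False
    by (cases s) (auto simp: autj_def dl_def)
qed

lemma dl_state:
  assumes "has_period B j \<Longrightarrow> pj B j > 0" "s \<in> astates (autj c B j)"
  shows "dl c B j s \<in> astates (autj c B j)"
  using assms by (cases "has_period B j"; cases s) (auto simp: autj_def dl_def)

lemma autj_init: assumes "has_period B j \<Longrightarrow> pj B j > 0"
  shows "ainit (autj c B j) = {Some 0}" "afinal (autj c B j) = {Some (c j)}"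
    "Some 0 \<in> astates (autj c B j)" "Some (c j) \<in> astates (autj c B j)"
  using assms by (auto simp: autj_def)

lemma autj_card: assumes "has_period B j \<Longrightarrow> pj B j > 0"
  shows "card (astates (autj c B j)) = c j + pj B j" "finite (astates (autj c B j))"
  using assms by (auto simp: autj_def pj_def card_image)

lemma dl_periodic:
  assumes "has_period B j" "pj B j > 0"
  shows "(dl c B j ^^ m) (Some 0) = Some (if m < c j then m else c j + (m - c j) mod pj B j)"
proof (induction m)
  case 0 then show ?case by simp
next
  case (Suc m)
  let ?p = "pj B j" and ?c = "c j"
  have "(dl c B j ^^ Suc m) (Some 0) = dl c B j (Some (if m < ?c then m else ?c + (m - ?c) mod ?p))"
    using Suc by simp
  also have "\<dots> = Some (if Suc m < ?c then Suc m else ?c + (Suc m - ?c) mod ?p)"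
  proof (cases "m < ?c")
    case True then show ?thesis using assms by (auto simp: dl_def)
  next
    case False
    define r where "r = (m - ?c) mod ?p"
    have r: "r < ?p" using assms(2) by (simp add: r_def)
    have e: "(Suc m - ?c) mod ?p = (if Suc r = ?p then 0 else Suc r)"
      using False by (simp add: r_def Suc_diff_le mod_Suc)
    show ?thesis using False assms r unfolding e r_def[symmetric] by (auto simp: dl_def)
  qed
  finally show ?case .
qed

lemma dl_nonperiodic:
  assumes "\<not> has_period B j"
  shows "(dl c B j ^^ m) (Some 0) = (if m \<le> c j then Some m else None)"
proof (induction m)
  case 0 then show ?case by simp
next
  case (Suc m)
  show ?case using Suc assms
    by (auto simp: dl_def simp del: funpow.simps simp add: funpow_Suc_right[symmetric] funpow.simps(2)[where n=m] o_def)
qed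

lemma dl_final:
  assumes "has_period B j \<Longrightarrow> pj B j > 0"
  shows "(dl c B j ^^ m) (Some 0) = Some (c j) \<longleftrightarrow>
    (if has_period B j then c j \<le> m \<and> pj B j dvd (m - c j) else m = c j)"
proof (cases "has_period B j")
  case True
  then show ?thesis using dl_periodic[OF True assms[OF True]]
    by (auto simp: mod_eq_0_iff_dvd) 
next
  case False
  then show ?thesis using dl_nonperiodic[OF False] by auto
qed

lemma card_lists_prod:
  assumes "\<And>j. j < n \<Longrightarrow> finite (S j)"
  shows "card {q. length q = n \<and> (\<forall>j<n. q ! j \<in> S j)} = (\<Prod>j<n. card (S j))"
  using assms
proof (induction n arbitrary: S)
  case 0 then show ?case by simp
next
  case (Suc n)
  have eq: "{q. length q = Suc n \<and> (\<forall>j<Suc n. q ! j \<in> S j)}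
      = (\<lambda>(x, q). x # q) ` (S 0 \<times> {q. length q = n \<and> (\<forall>j<n. q ! j \<in> S (Suc j))})"
  proof (rule set_eqI, rule iffI)
    fix q assume "q \<in> {q. length q = Suc n \<and> (\<forall>j<Suc n. q ! j \<in> S j)}"
    hence q: "length q = Suc n" "\<forall>j<Suc n. q ! j \<in> S j" by auto
    then obtain x r where "q = x # r" by (cases q) auto
    with q show "q \<in> (\<lambda>(x, q). x # q) ` (S 0 \<times> {q. length q = n \<and> (\<forall>j<n. q ! j \<in> S (Suc j))})"
      by (auto intro!: image_eqI[of _ _ "(x, r)"])
  next
    fix q assume "q \<in> (\<lambda>(x, q). x # q) ` (S 0 \<times> {q. length q = n \<and> (\<forall>j<n. q ! j \<in> S (Suc j))})"
    then obtain x r where xr: "q = x # r" "x \<in> S 0" "length r = n" "\<forall>j<n. r ! j \<in> S (Suc j)" by auto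
    have "(x # r) ! j \<in> S j" if "j < Suc n" for j using xr that by (cases j) auto
    then show "q \<in> {q. length q = Suc n \<and> (\<forall>j<Suc n. q ! j \<in> S j)}" using xr by auto
  qed
  have "card {q. length q = Suc n \<and> (\<forall>j<Suc n. q ! j \<in> S j)}
      = card (S 0 \<times> {q. length q = n \<and> (\<forall>j<n. q ! j \<in> S (Suc j))})"
    unfolding eq by (rule card_image) (auto simp: inj_on_def)
  also have "\<dots> = card (S 0) * (\<Prod>j<n. card (S (Suc j)))"
    using Suc by (simp add: card_cartesian_product)
  also have "\<dots> = (\<Prod>j<Suc n. card (S j))" by (simp only: prod.lessThan_Suc_shift)
  finally show ?case .
qed


definition stp :: "(nat\<Rightarrow>nat) \<Rightarrow> (nat\<Rightarrow>nat) set \<Rightarrow> nat option list \<Rightarrow> nat \<Rightarrow> nat option list" where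
  "stp c B q a = q[a := dl c B a (q ! a)]"

context
  fixes k :: nat and c :: "nat \<Rightarrow> nat" and B :: "(nat \<Rightarrow> nat) set"
  assumes hp: "\<And>j. has_period B j \<Longrightarrow> pj B j > 0"
begin

abbreviation "MM \<equiv> shuffle (map (autj c B) [0..<k])"

lemma MM_states: "astates MM = {q. length q = k \<and> (\<forall>j<k. q!j \<in> astates (autj c B j))}"
  by (simp add: shuffle_def Let_def)

lemma MM_init: "ainit MM = {replicate k (Some 0)}"
  using autj_init(1)[OF hp] by (auto simp: shuffle_def Let_def intro: nth_equalityI)

lemma MM_final: "afinal MM = {q. length q = k \<and> (\<forall>j<k. q!j = Some (c j))}"
  using autj_init(2)[OF hp] by (auto simp: shuffle_def Let_def)

lemma MM_trans: "(q, a, r) \<in> atrans MM \<longleftrightarrow> q \<in> astates MM \<and> a < k \<and> r = stp c B q a"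
proof
  assume "(q, a, r) \<in> atrans MM"
  then obtain j q' where H: "r = q[j := q']" "length q = k" "j < k"
     "\<forall>i<k. i \<noteq> j \<longrightarrow> q ! i \<in> astates (autj c B i)" "(q ! j, a, q') \<in> atrans (autj c B j)"
    by (auto simp: shuffle_def Let_def)
  from H(5) have "q ! j \<in> astates (autj c B j)" "a = j" "q' = dl c B j (q ! j)"
    using autj_trans[OF hp] by blast+
  with H show "q \<in> astates MM \<and> a < k \<and> r = stp c B q a"
    by (auto simp: MM_states stp_def)
next
  assume "q \<in> astates MM \<and> a < k \<and> r = stp c B q a"
  hence H: "length q = k" "\<forall>j<k. q!j \<in> astates (autj c B j)" "a < k" "r = q[a := dl c B a (q ! a)]"
    by (auto simp: MM_states stp_def)
  have "(q ! a, a, dl c B a (q ! a)) \<in> atrans (autj c B a)"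
    using autj_trans[OF hp] H by blast
  with H show "(q, a, r) \<in> atrans MM"
    unfolding shuffle_def Let_def by (auto intro!: exI[of _ a])
qed

lemma stp_state: "q \<in> astates MM \<Longrightarrow> a < k \<Longrightarrow> stp c B q a \<in> astates MM"
  using dl_state[OF hp] by (auto simp: MM_states stp_def nth_list_update)

lemma MM_path: "q \<in> astates MM \<Longrightarrow> path MM q w r \<longleftrightarrow> w \<in> lists {..<k} \<and> r = foldl (stp c B) q w"
proof (induction w arbitrary: q)
  case Nil
  then show ?case by (auto elim: path.cases intro: path_nil)
next
  case (Cons a w)
  show ?case
  proof
    assume "path MM q (a # w) r"
    then obtain q' where "(q, a, q') \<in> atrans MM" "path MM q' w r" by (auto elim: path.cases)
    with Cons show "a # w \<in> lists {..<k} \<and> r = foldl (stp c B) q (a # w)"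
      using MM_trans stp_state by auto
  next
    assume H: "a # w \<in> lists {..<k} \<and> r = foldl (stp c B) q (a # w)"
    hence "(q, a, stp c B q a) \<in> atrans MM" using MM_trans Cons.prems by auto
    moreover have "path MM (stp c B q a) w r" using Cons.IH[of "stp c B q a"] H stp_state Cons.prems by auto
    ultimately show "path MM q (a # w) r" by (rule path_cons)
  qed
qed

lemma foldl_stp:
  "length q = k \<Longrightarrow> w \<in> lists {..<k} \<Longrightarrow> length (foldl (stp c B) q w) = k \<and>
     (\<forall>j<k. foldl (stp c B) q w ! j = (dl c B j ^^ count_list w j) (q ! j))"
proof (induction w arbitrary: q)
  case Nil then show ?case by simp
next
  case (Cons a w)
  have "length (stp c B q a) = k" using Cons.prems by (simp add: stp_def)
  note IH = Cons.IH[OF this] 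
  show ?case using IH Cons.prems
    by (auto simp: stp_def nth_list_update funpow_Suc_right simp del: funpow.simps)
qed

end

theorem mainTheorem5:
  fixes k :: nat and c :: "nat \<Rightarrow> nat" and B :: "(nat \<Rightarrow> nat) set"
  assumes "atomic_resimple k c B"
  shows "complete_det (shuffle (map (autj c B) [0..<k])) {..<k}
       \<and> lang (shuffle (map (autj c B) [0..<k])) {..<k}
           = {w \<in> lists {..<k}. parikh w \<in> resimple_set c B}
       \<and> card (astates (shuffle (map (autj c B) [0..<k]))) = (\<Prod>j<k. c j + pj B j)"
proof -
  have fin: "finite B" and fr: "free_basis B" using assms atomic_resimple_def by auto
  have hp: "\<And>j. has_period B j \<Longrightarrow> pj B j > 0" using pj_props(1)[OF fin fr] by blast
  let ?M = "shuffle (map (autj c B) [0..<k])"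
  note St = MM_states[OF hp, where k=k and c=c] and In = MM_init[OF hp, where k=k and c=c] and Fi = MM_final[OF hp, where k=k and c=c]
    and Tr = MM_trans[OF hp, where k=k and c=c]
  have cd: "complete_det ?M {..<k}"
    unfolding complete_det_def
  proof (intro conjI)
    show "ainit ?M \<subseteq> astates ?M" using St In autj_init(3)[OF hp] by auto
    show "afinal ?M \<subseteq> astates ?M" using St Fi autj_init(4)[OF hp] by auto
    show "card (ainit ?M) = 1" using In by simp
    show "atrans ?M \<subseteq> astates ?M \<times> {..<k} \<times> astates ?M"
      using Tr stp_state[OF hp] by auto
    show "\<forall>q\<in>astates ?M. \<forall>a\<in>{..<k}. \<exists>!q'. (q, a, q') \<in> atrans ?M"
      using Tr by auto
  qed
  have lg: "lang ?M {..<k} = {w \<in> lists {..<k}. parikh w \<in> resimple_set c B}"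
  proof (rule set_eqI)
    fix w
    let ?q0 = "replicate k (Some (0::nat))"
    have q0: "?q0 \<in> astates ?M" using St autj_init(3)[OF hp] by auto
    have "w \<in> lang ?M {..<k} \<longleftrightarrow> w \<in> lists {..<k} \<and> foldl (stp c B) ?q0 w \<in> afinal ?M"
      unfolding lang_def using In MM_path[where k=k and c=c and B=B, OF hp q0] by auto
    also have "\<dots> \<longleftrightarrow> w \<in> lists {..<k} \<and> (\<forall>j<k. (dl c B j ^^ count_list w j) (Some 0) = Some (c j))"
    proof (cases "w \<in> lists {..<k}")
      case True
      have F: "length (foldl (stp c B) ?q0 w) = k"
        "\<forall>j<k. foldl (stp c B) ?q0 w ! j = (dl c B j ^^ count_list w j) (?q0 ! j)"
        using foldl_stp[OF hp, where k=k and c=c and q="?q0" and w=w] True by auto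
      have "foldl (stp c B) ?q0 w \<in> afinal ?M \<longleftrightarrow> (\<forall>j<k. foldl (stp c B) ?q0 w ! j = Some (c j))"
        using Fi F(1) by simp
      also have "\<dots> \<longleftrightarrow> (\<forall>j<k. (dl c B j ^^ count_list w j) (Some 0) = Some (c j))"
        using F(2) by simp
      finally show ?thesis using True by simp
    qed simp
    also have "\<dots> \<longleftrightarrow> w \<in> lists {..<k} \<and> parikh w \<in> resimple_set c B"
      using resimple_iff[OF assms] dl_final[OF hp] by (metis (no_types, lifting))
    finally show "w \<in> lang ?M {..<k} \<longleftrightarrow> w \<in> {w \<in> lists {..<k}. parikh w \<in> resimple_set c B}"
      by simp
  qed
  have "card (astates ?M) = (\<Prod>j<k. card (astates (autj c B j)))"
    using card_lists_prod[of k "\<lambda>j. astates (autj c B j)"] St autj_card(2)[OF hp] by simp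
  also have "\<dots> = (\<Prod>j<k. c j + pj B j)" using autj_card(1)[OF hp] by simp
  finally show ?thesis using cd lg by blast
qed

end
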